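(* Let $\mathcal H$ be a family of graphs. The following are equivalent: (i) there are constants $c_1=c_1(\mathcal H)$ and $c_2=c_2(\mathcal H)$ such that every $\mathcal H$-free graph $G$ has fewer than $c_2$ vertices of degree at least $c_1$; (ii) there is a positive integer $n$ such that $\mathcal H\le\{K_n,\ K_{n,n},\ nK_{1,n}\}$.
   Context: All graphs are finite, simple, undirected. For graphs $H_1,H_2$, write $H_1\prec H_2$ if $H_2$ contains an induced subgraph isomorphic to $H_1$. A graph $G$ is $\mathcal H$-free if no $H\in\mathcal H$ satisfies $H\prec G$. For families $\mathcal H_1,\mathcal H_2$, write $\mathcal H_1\le\mathcal H_2$ if for every $H_2\in\mathcal H_2$ there is $H_1\in\mathcal H_1$ with $H_1\prec H_2$. $K_n$ is the complete graph, $K_{s,t}$ the complete bipartite graph, and $nG$ the disjoint union of $n$ copies of $G$. *)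

theory Defs
  imports Main "HOL-Library.Nat_Bijection"
begin

text \<open>A finite simple graph on natural-number vertices: a pair (V, E) with V finite
and E a set of 2-element subsets of V. Every finite simple graph is isomorphic to one of these.\<close>

type_synonym graph = "nat set \<times> nat set set"

definition wf_graph :: "graph \<Rightarrow> bool" where
  "wf_graph G \<longleftrightarrow> finite (fst G) \<and> (\<forall>e\<in>snd G. card e = 2 \<and> e \<subseteq> fst G)"

definition induced_sub :: "graph \<Rightarrow> graph \<Rightarrow> bool" (infix "\<prec>" 50) where
  "H \<prec> G \<longleftrightarrow> (\<exists>f. inj_on f (fst H) \<and> f ` fst H \<subseteq> fst G \<and>
      (\<forall>u\<in>fst H. \<forall>v\<in>fst H. {u, v} \<in> snd H \<longleftrightarrow> {f u, f v} \<in> snd G))"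

definition H_free :: "graph set \<Rightarrow> graph \<Rightarrow> bool" where
  "H_free \<H> G \<longleftrightarrow> (\<forall>H\<in>\<H>. \<not> H \<prec> G)"

definition fam_le :: "graph set \<Rightarrow> graph set \<Rightarrow> bool" where
  "fam_le \<H>1 \<H>2 \<longleftrightarrow> (\<forall>H2\<in>\<H>2. \<exists>H1\<in>\<H>1. H1 \<prec> H2)"

definition degree :: "graph \<Rightarrow> nat \<Rightarrow> nat" where
  "degree G v = card {u \<in> fst G. {v, u} \<in> snd G}"

definition complete :: "nat \<Rightarrow> graph" where
  "complete n = ({0..<n}, {{i, j} | i j. i < n \<and> j < n \<and> i \<noteq> j})"

definition complete_bip :: "nat \<Rightarrow> nat \<Rightarrow> graph" where
  "complete_bip s t = ({0..<s+t}, {{i, j} | i j. i < s \<and> s \<le> j \<and> j < s + t})"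

definition copies :: "nat \<Rightarrow> graph \<Rightarrow> graph" where
  "copies m G = ((\<lambda>(i, v). prod_encode (i, v)) ` ({0..<m} \<times> fst G),
     {{prod_encode (i, u), prod_encode (i, v)} | i u v. i < m \<and> {u, v} \<in> snd G})"

end

theory Submission
  imports Defs "HOL-Library.Ramsey"
begin

lemma induced_trans:
  assumes "induced_sub H K" "induced_sub K G" shows "induced_sub H G"
proof -
  obtain f where f: "inj_on f (fst H)" "f ` fst H \<subseteq> fst K"
    "\<forall>u\<in>fst H. \<forall>v\<in>fst H. {u, v} \<in> snd H \<longleftrightarrow> {f u, f v} \<in> snd K"
    using assms(1) unfolding induced_sub_def by blast
  obtain g where g: "inj_on g (fst K)" "g ` fst K \<subseteq> fst G"
    "\<forall>u\<in>fst K. \<forall>v\<in>fst K. {u, v} \<in> snd K \<longleftrightarrow> {g u, g v} \<in> snd G"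
    using assms(2) unfolding induced_sub_def by blast
  show ?thesis unfolding induced_sub_def
  proof (intro exI[of _ "g \<circ> f"] conjI ballI)
    show "inj_on (g \<circ> f) (fst H)" by (rule comp_inj_on[OF f(1) inj_on_subset[OF g(1) f(2)]])
    have "(g \<circ> f) ` fst H = g ` (f ` fst H)" by (simp add: image_comp)
    also have "\<dots> \<subseteq> g ` fst K" by (rule image_mono[OF f(2)])
    also have "\<dots> \<subseteq> fst G" by (rule g(2))
    finally show "(g \<circ> f) ` fst H \<subseteq> fst G" .
    fix u v assume "u \<in> fst H" "v \<in> fst H"
    then show "({u, v} \<in> snd H) = ({(g \<circ> f) u, (g \<circ> f) v} \<in> snd G)"
    proof -
      have fu: "f u \<in> fst K" "f v \<in> fst K" using f(2) \<open>u \<in> fst H\<close> \<open>v \<in> fst H\<close> by auto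
      show ?thesis using f(3) g(3) fu \<open>u \<in> fst H\<close> \<open>v \<in> fst H\<close> by simp
    qed
  qed
qed

lemma wf_complete: "wf_graph (complete n)"
  unfolding wf_graph_def complete_def by (auto simp: card_insert_if)

lemma wf_complete_bip: "wf_graph (complete_bip s t)"
  unfolding wf_graph_def complete_bip_def by (auto simp: card_insert_if)

lemma wf_copies: assumes "wf_graph G" shows "wf_graph (copies m G)"
proof -
  have fin: "finite (fst (copies m G))" using assms unfolding wf_graph_def copies_def by simp
  have "card e = 2 \<and> e \<subseteq> fst (copies m G)" if e: "e \<in> snd (copies m G)" for e
  proof -
    obtain i u v where e': "e = {prod_encode (i, u), prod_encode (i, v)}" "i < m" "{u,v} \<in> snd G"
      using e unfolding copies_def by auto
    have "card {u,v} = 2" "{u,v} \<subseteq> fst G" using assms e' unfolding wf_graph_def by auto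
    then have "u \<noteq> v" by auto
    then show ?thesis using \<open>{u,v} \<subseteq> fst G\<close> e' unfolding copies_def by auto
  qed
  then show ?thesis using fin unfolding wf_graph_def by blast
qed

lemma card_deg_ge:
  assumes "wf_graph G" "X \<subseteq> fst G" "c2 \<le> card X" "\<forall>x\<in>X. c1 \<le> degree G x"
  shows "c2 \<le> card {v \<in> fst G. degree G v \<ge> c1}"
proof -
  have "X \<subseteq> {v \<in> fst G. degree G v \<ge> c1}" using assms by auto
  moreover have "finite (fst G)" using assms unfolding wf_graph_def by auto
  ultimately have "card X \<le> card {v \<in> fst G. degree G v \<ge> c1}"
    by (intro card_mono) auto
  then show ?thesis using assms(3) by linarith
qed

lemma deg_ge:
  assumes "wf_graph G" "Y \<subseteq> fst G" "\<forall>y\<in>Y. {x,y} \<in> snd G" "c \<le> card Y"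
  shows "c \<le> degree G x"
proof -
  have "finite (fst G)" using assms unfolding wf_graph_def by auto
  have "Y \<subseteq> {u \<in> fst G. {x, u} \<in> snd G}" using assms by auto
  then have "card Y \<le> card {u \<in> fst G. {x, u} \<in> snd G}"
    using \<open>finite (fst G)\<close> by (intro card_mono) auto
  then show ?thesis unfolding degree_def using assms(4) by linarith
qed


lemma edge_complete: "u < n \<Longrightarrow> v < n \<Longrightarrow> {u,v} \<in> snd (complete n) \<longleftrightarrow> u \<noteq> v"
  unfolding complete_def by (auto simp: doubleton_eq_iff)

lemma edge_bip: "u < s + t \<Longrightarrow> v < s + t \<Longrightarrow>
   {u,v} \<in> snd (complete_bip s t) \<longleftrightarrow> (u < s \<and> s \<le> v) \<or> (v < s \<and> s \<le> u)"
  unfolding complete_bip_def by (auto simp: doubleton_eq_iff)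

lemma edge_K1n: "{u,v} \<in> snd (complete_bip 1 n) \<longleftrightarrow> (u = 0 \<and> 1 \<le> v \<and> v < 1 + n) \<or> (v = 0 \<and> 1 \<le> u \<and> u < 1 + n)"
  unfolding complete_bip_def by (auto simp: doubleton_eq_iff)

lemma edge_copies:
  assumes "a < 1 + n" "b < 1 + n"
  shows "{prod_encode (i,a), prod_encode (j,b)} \<in> snd (copies m (complete_bip 1 n)) \<longleftrightarrow>
     i = j \<and> i < m \<and> ((a = 0) \<noteq> (b = 0))"
proof
  assume "{prod_encode (i,a), prod_encode (j,b)} \<in> snd (copies m (complete_bip 1 n))"
  then obtain i' u v where e: "{prod_encode (i,a), prod_encode (j,b)} = {prod_encode (i', u), prod_encode (i', v)}"
     "i' < m" "{u,v} \<in> snd (complete_bip 1 n)"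
    unfolding copies_def by auto
  from e(1) have "(i = i' \<and> a = u \<and> j = i' \<and> b = v) \<or> (i = i' \<and> a = v \<and> j = i' \<and> b = u)"
    by (auto simp: doubleton_eq_iff)
  then show "i = j \<and> i < m \<and> ((a = 0) \<noteq> (b = 0))" using e(2,3) unfolding edge_K1n by auto
next
  assume h: "i = j \<and> i < m \<and> ((a = 0) \<noteq> (b = 0))"
  then have "{a,b} \<in> snd (complete_bip 1 n)" unfolding edge_K1n using assms by auto
  then have "{prod_encode (i,a), prod_encode (j,b)} = {prod_encode (i, a), prod_encode (i, b)} \<and> i < m \<and> {a,b} \<in> snd (complete_bip 1 n)"
      using h by simp
    then show "{prod_encode (i,a), prod_encode (j,b)} \<in> snd (copies m (complete_bip 1 n))"
      unfolding copies_def snd_conv mem_Collect_eq by blast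
qed

lemma fst_copies: "fst (copies m G) = (\<lambda>(i, v). prod_encode (i, v)) ` ({0..<m} \<times> fst G)"
  unfolding copies_def by simp

lemma embed_complete:
  assumes "wf_graph G" "X \<subseteq> fst G" "card X = n" "clique X (snd G)"
  shows "induced_sub (complete n) G"
proof -
  have "finite X" using assms unfolding wf_graph_def using finite_subset by blast
  then obtain f where f: "bij_betw f {0..<n} X" using ex_bij_betw_nat_finite assms(3) by blast
  show ?thesis unfolding induced_sub_def
  proof (intro exI[of _ f] conjI ballI)
    show "inj_on f (fst (complete n))" using f unfolding bij_betw_def complete_def by simp
    show "f ` fst (complete n) \<subseteq> fst G" using f assms(2) unfolding bij_betw_def complete_def by simp
    fix u v assume uv: "u \<in> fst (complete n)" "v \<in> fst (complete n)"
    then have uv': "u < n" "v < n" unfolding complete_def by auto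
    show "({u, v} \<in> snd (complete n)) = ({f u, f v} \<in> snd G)"
    proof (cases "u = v")
      case True
      have "{f u, f v} \<notin> snd G" using assms(1) True unfolding wf_graph_def by force
      then show ?thesis using True edge_complete[OF uv'] by simp
    next
      case False
      then have "f u \<noteq> f v" "f u \<in> X" "f v \<in> X" using f uv' unfolding bij_betw_def inj_on_def by auto
      then have "{f u, f v} \<in> snd G" using assms(4) unfolding clique_def by blast
      then show ?thesis using False edge_complete[OF uv'] by simp
    qed
  qed
qed

lemma embed_bip:
  assumes "wf_graph G" "A \<subseteq> fst G" "B \<subseteq> fst G" "card A = n" "card B = n"
    "indep A (snd G)" "indep B (snd G)" "\<forall>a\<in>A. \<forall>b\<in>B. {a,b} \<in> snd G"
  shows "induced_sub (complete_bip n n) G"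
proof -
  have nl: "{x,x} \<notin> snd G" for x using assms(1) unfolding wf_graph_def by force
  have "finite A" "finite B" using assms unfolding wf_graph_def using finite_subset by blast+
  then obtain fa fb where fa: "bij_betw fa {0..<n} A" and fb: "bij_betw fb {0..<n} B"
    using ex_bij_betw_nat_finite assms(4,5) by metis
  have disj: "x \<in> A \<Longrightarrow> x \<in> B \<Longrightarrow> False" for x using assms(8) nl by blast
  define f where "f u = (if u < n then fa u else fb (u - n))" for u
  have fA: "u < n \<Longrightarrow> f u \<in> A" for u using fa unfolding f_def bij_betw_def by auto
  have fB: "n \<le> u \<Longrightarrow> u < n + n \<Longrightarrow> f u \<in> B" for u using fb unfolding f_def bij_betw_def by auto
  have finj: "inj_on f {0..<n+n}"
  proof (rule inj_onI)
    fix u v assume uv: "u \<in> {0..<n+n}" "v \<in> {0..<n+n}" "f u = f v"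
    show "u = v"
    proof (cases "u < n"; cases "v < n")
      assume "u < n" "v < n" then show ?thesis using uv fa unfolding f_def bij_betw_def inj_on_def by auto
    next
      assume "u < n" "\<not> v < n"
      then have "f u \<in> A" "f v \<in> B" using uv(1,2) fA fB by auto
      then show ?thesis using uv(3) disj by metis
    next
      assume "\<not> u < n" "v < n"
      then have "f v \<in> A" "f u \<in> B" using uv(1,2) fA fB by auto
      then show ?thesis using uv(3) disj by metis
    next
      assume a: "\<not> u < n" "\<not> v < n"
      then have "fb (u - n) = fb (v - n)" using uv unfolding f_def by simp
      moreover have "u - n \<in> {0..<n}" "v - n \<in> {0..<n}" using a uv by auto
      ultimately have "u - n = v - n" using fb unfolding bij_betw_def inj_on_def by blast
      then show ?thesis using a by simp
    qed
  qed
  show ?thesis unfolding induced_sub_def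
  proof (intro exI[of _ f] conjI ballI)
    show "inj_on f (fst (complete_bip n n))" using finj unfolding complete_bip_def by simp
    show "f ` fst (complete_bip n n) \<subseteq> fst G"
    proof
      fix y assume "y \<in> f ` fst (complete_bip n n)"
      then obtain u where u: "u < n + n" "y = f u" unfolding complete_bip_def by auto
      show "y \<in> fst G"
      proof (cases "u < n")
        case True then show ?thesis using fA u assms(2) by auto
      next
        case False then show ?thesis using fB u assms(3) by auto
      qed
    qed
    fix u v assume uv: "u \<in> fst (complete_bip n n)" "v \<in> fst (complete_bip n n)"
    then have uv': "u < n + n" "v < n + n" unfolding complete_bip_def by auto
    show "({u, v} \<in> snd (complete_bip n n)) = ({f u, f v} \<in> snd G)"
      unfolding edge_bip[OF uv']
    proof (cases "u < n"; cases "v < n")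
      assume a: "u < n" "v < n"
      have "f u \<in> A" "f v \<in> A" using a fA by auto
      then have "{f u, f v} \<notin> snd G" using assms(6) nl unfolding indep_def by metis
      then show "(u < n \<and> n \<le> v \<or> v < n \<and> n \<le> u) = ({f u, f v} \<in> snd G)" using a by simp
    next
      assume a: "u < n" "\<not> v < n"
      then have "{f u, f v} \<in> snd G" using fA[of u] fB[of v] uv' assms(8) by simp
      then show "(u < n \<and> n \<le> v \<or> v < n \<and> n \<le> u) = ({f u, f v} \<in> snd G)" using a by simp
    next
      assume a: "\<not> u < n" "v < n"
      then have "{f v, f u} \<in> snd G" using fA[of v] fB[of u] uv' assms(8) by simp
      then show "(u < n \<and> n \<le> v \<or> v < n \<and> n \<le> u) = ({f u, f v} \<in> snd G)" using a
        by (simp add: insert_commute)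
    next
      assume a: "\<not> u < n" "\<not> v < n"
      have "f u \<in> B" "f v \<in> B" using a fB uv' by auto
      then have "{f u, f v} \<notin> snd G" using assms(7) nl unfolding indep_def by metis
      then show "(u < n \<and> n \<le> v \<or> v < n \<and> n \<le> u) = ({f u, f v} \<in> snd G)" using a by simp
    qed
  qed
qed

definition isf :: "nat \<Rightarrow> nat set set \<Rightarrow> nat set \<Rightarrow> nat \<Rightarrow> (nat \<times> nat \<Rightarrow> nat) \<Rightarrow> bool" where
  "isf n E V k \<phi> \<longleftrightarrow> inj_on \<phi> ({0..<k} \<times> {0..<1+n}) \<and> \<phi> ` ({0..<k} \<times> {0..<1+n}) \<subseteq> V \<and>
     (\<forall>p\<in>{0..<k} \<times> {0..<1+n}. \<forall>q\<in>{0..<k} \<times> {0..<1+n}.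
        {\<phi> p, \<phi> q} \<in> E \<longleftrightarrow> fst p = fst q \<and> ((snd p = 0) \<noteq> (snd q = 0)))"

lemma embed_copies:
  assumes "isf n (snd G) (fst G) n \<phi>"
  shows "induced_sub (copies n (complete_bip 1 n)) G"
proof -
  let ?D = "{0..<n} \<times> {0..<1+n}"
  note H = assms[unfolded isf_def]
  have inj: "inj_on \<phi> ?D" using H by (rule conjunct1)
  have img: "\<phi> ` ?D \<subseteq> fst G" using H by (rule conjunct1[OF conjunct2])
  have adj: "\<forall>p\<in>?D. \<forall>q\<in>?D. {\<phi> p, \<phi> q} \<in> snd G \<longleftrightarrow> fst p = fst q \<and> ((snd p = 0) \<noteq> (snd q = 0))"
    using H by (rule conjunct2[OF conjunct2])
  have fstc: "fst (copies n (complete_bip 1 n)) = prod_encode ` ?D"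
    unfolding copies_def complete_bip_def fst_conv by (simp only: case_prod_eta)
  define f where "f w = \<phi> (prod_decode w)" for w
  have fe: "f \<circ> prod_encode = \<phi>" unfolding f_def by (simp add: o_def)
  have fe': "f (prod_encode p) = \<phi> p" for p unfolding f_def by simp
  show ?thesis unfolding induced_sub_def fstc
  proof (intro exI[of _ f] conjI ballI)
    show "inj_on f (prod_encode ` ?D)"
      by (rule inj_on_imageI) (simp only: fe inj)
    have "f ` prod_encode ` ?D = \<phi> ` ?D" by (simp add: image_comp fe)
    then show "f ` prod_encode ` ?D \<subseteq> fst G" using img by simp
    fix u v assume "u \<in> prod_encode ` ?D" "v \<in> prod_encode ` ?D"
    then obtain p q where pq: "p \<in> ?D" "q \<in> ?D" "u = prod_encode p" "v = prod_encode q" by blast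
    obtain i a j b where ij: "p = (i,a)" "q = (j,b)" by fastforce
    have ab: "a < 1 + n" "b < 1 + n" "i < n" using pq ij by auto
    have 1: "{u,v} \<in> snd (copies n (complete_bip 1 n)) \<longleftrightarrow> i = j \<and> i < n \<and> ((a = 0) \<noteq> (b = 0))"
      unfolding pq(3,4) ij by (rule edge_copies[OF ab(1,2)])
    have 2: "{f u, f v} \<in> snd G \<longleftrightarrow> i = j \<and> ((a = 0) \<noteq> (b = 0))"
      unfolding pq(3,4) fe' using adj[rule_format, OF pq(1,2)] unfolding ij by simp
    show "({u, v} \<in> snd (copies n (complete_bip 1 n))) = ({f u, f v} \<in> snd G)"
      unfolding 1 2 using ab(3) by blast
  qed
qed


locale core =
  fixes V :: "nat set" and E :: "nat set set" and n t :: nat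
  assumes finV: "finite V"
  and edges: "\<forall>e\<in>E. card e = 2 \<and> e \<subseteq> V"
  and tpos: "1 \<le> t"
  and ram: "\<forall>X\<subseteq>V. t \<le> card X \<longrightarrow> (\<exists>Y\<subseteq>X. card Y = n \<and> indep Y E)"
  and nobip: "\<not>(\<exists>A B. A \<subseteq> V \<and> B \<subseteq> V \<and> card A = n \<and> card B = n \<and> indep A E \<and> indep B E \<and>
                (\<forall>a\<in>A. \<forall>b\<in>B. {a,b} \<in> E))"
  and nostar: "\<not>(\<exists>\<phi>. isf n E V n \<phi>)"
begin

definition Nb :: "nat \<Rightarrow> nat set" where "Nb w = {u\<in>V. {w,u} \<in> E}"
definition heavy :: "nat \<Rightarrow> nat set \<Rightarrow> bool" where
  "heavy w S \<longleftrightarrow> t * card (S - Nb w) + t \<le> card S"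

lemma noloop: "{x,x} \<notin> E"
proof
  assume "{x,x} \<in> E"
  then have "card {x,x} = 2" using edges by blast
  then show False by simp
qed

lemma edgeV: "{a,b} \<in> E \<Longrightarrow> a \<in> V \<and> b \<in> V"
proof -
  assume "{a,b} \<in> E"
  then have "{a,b} \<subseteq> V" using edges by blast
  then show ?thesis by simp
qed

lemma fin: "X \<subseteq> V \<Longrightarrow> finite X"
  using finV finite_subset by blast

lemma ktt:
  assumes "T \<subseteq> V" "U \<subseteq> V" "t \<le> card T" "t \<le> card U" "\<forall>w\<in>T. \<forall>u\<in>U. {w,u} \<in> E"
  shows False
proof -
  obtain A where A: "A \<subseteq> T" "card A = n" "indep A E" using ram assms by blast
  obtain B where B: "B \<subseteq> U" "card B = n" "indep B E" using ram assms by blast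
  have "A \<subseteq> V" "B \<subseteq> V" using A(1) B(1) assms(1,2) by auto
  moreover have "\<forall>a\<in>A. \<forall>b\<in>B. {a,b} \<in> E" using A(1) B(1) assms(5) by blast
  ultimately show False using nobip A(2,3) B(2,3) by blast
qed

lemma heavy_few:
  assumes "S \<subseteq> V"
  shows "card {w\<in>V. heavy w S} < t"
proof (rule ccontr)
  assume "\<not> card {w\<in>V. heavy w S} < t"
  then have "t \<le> card {w\<in>V. heavy w S}" by simp
  then obtain T where T: "T \<subseteq> {w\<in>V. heavy w S}" "card T = t" "finite T"
    by (rule obtain_subset_with_card_n)
  define U where "U = {u\<in>S. \<forall>w\<in>T. {w,u} \<in> E}"
  have SU: "S - U = (\<Union>w\<in>T. S - Nb w)"
  proof (intro equalityI subsetI)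
    fix x assume "x \<in> S - U"
    then obtain w where "w \<in> T" "{w,x} \<notin> E" "x \<in> S" unfolding U_def by blast
    then show "x \<in> (\<Union>w\<in>T. S - Nb w)" unfolding Nb_def by blast
  next
    fix x assume "x \<in> (\<Union>w\<in>T. S - Nb w)"
    then obtain w where "w \<in> T" "x \<notin> Nb w" "x \<in> S" by blast
    then have "{w,x} \<notin> E" using assms unfolding Nb_def by blast
    then show "x \<in> S - U" using \<open>w \<in> T\<close> \<open>x \<in> S\<close> unfolding U_def by blast
  qed
  have "card (S - U) \<le> (\<Sum>w\<in>T. card (S - Nb w))" unfolding SU using card_UN_le T(3) by blast
  have each: "t * card (S - Nb w) + t \<le> card S" if "w \<in> T" for w
  proof -
    have "heavy w S" using T(1) that by blast
    then show ?thesis unfolding heavy_def .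
  qed
  have "(\<Sum>w\<in>T. t * card (S - Nb w) + t) \<le> (\<Sum>w\<in>T. card S)" using each by (rule sum_mono)
  then have "t * (\<Sum>w\<in>T. card (S - Nb w)) + t * t \<le> t * card S"
    using T(2) by (simp add: sum.distrib sum_distrib_left)
  then have "t * ((\<Sum>w\<in>T. card (S - Nb w)) + t) \<le> t * card S" by (simp add: algebra_simps)
  then have "(\<Sum>w\<in>T. card (S - Nb w)) + t \<le> card S" using tpos by simp
  then have le: "card (S - U) + t \<le> card S" using \<open>card (S - U) \<le> _\<close> by linarith
  have "finite S" using assms fin by blast
  have "U \<subseteq> S" unfolding U_def by auto
  then have "card S = card U + card (S - U)" using \<open>finite S\<close>
    by (metis card_Un_disjoint Diff_disjoint Un_Diff_cancel Un_absorb1 finite_Diff finite_subset)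
  then have "t \<le> card U" using le by linarith
  moreover have "U \<subseteq> V" "T \<subseteq> V" using \<open>U \<subseteq> S\<close> assms T by auto
  moreover have "\<forall>w\<in>T. \<forall>u\<in>U. {w,u} \<in> E" unfolding U_def by blast
  ultimately show False using ktt[of T U] T(2) by linarith
qed

lemma card_filter_sum: "finite B \<Longrightarrow> card {b\<in>B. Q b} = (\<Sum>b\<in>B. if Q b then 1 else 0)"
proof -
  assume "finite B"
  have "card {b\<in>B. Q b} = (\<Sum>b\<in>{b\<in>B. Q b}. 1)" by simp
  also have "\<dots> = (\<Sum>b\<in>B. if Q b then 1 else 0)" using \<open>finite B\<close> by (rule sum.inter_filter)
  finally show ?thesis .
qed

lemma double_count:
  assumes "finite A" "finite B"
  shows "(\<Sum>a\<in>A. card {b\<in>B. Q a b}) = (\<Sum>b\<in>B. card {a\<in>A. Q a b})"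
proof -
  have "(\<Sum>a\<in>A. card {b\<in>B. Q a b}) = (\<Sum>a\<in>A. \<Sum>b\<in>B. if Q a b then 1 else 0)"
    using assms(2) by (simp add: card_filter_sum)
  also have "\<dots> = (\<Sum>b\<in>B. \<Sum>a\<in>A. if Q a b then 1 else 0)" by (rule sum.swap)
  also have "\<dots> = (\<Sum>b\<in>B. card {a\<in>A. Q a b})"
    using assms(1) by (simp add: card_filter_sum)
  finally show ?thesis .
qed

lemma pick:
  assumes P: "P \<subseteq> V" "2*t*t + 2*t + 1 \<le> card P" and C: "C \<subseteq> V" and R: "R \<subseteq> V"
    and L: "\<forall>c\<in>C. L c \<subseteq> V"
  shows "\<exists>w\<in>P. \<not> heavy w C \<and> \<not> heavy w R \<and> 2*t*card {c\<in>C. heavy w (L c)} \<le> card C"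
proof (rule ccontr)
  assume neg: "\<not> ?thesis"
  define HC where "HC = {w\<in>V. heavy w C}"
  define HR where "HR = {w\<in>V. heavy w R}"
  define P0 where "P0 = P - HC - HR"
  have finP: "finite P" using P fin by blast
  have finC: "finite C" using C fin by blast
  have finP0: "finite P0" unfolding P0_def using finP by simp
  have "P \<subseteq> P0 \<union> HC \<union> HR" unfolding P0_def by blast
  then have "card P \<le> card (P0 \<union> HC \<union> HR)"
    using finP0 fin[of HC] fin[of HR] unfolding HC_def HR_def by (intro card_mono) auto
  also have "\<dots> \<le> card P0 + card HC + card HR"
    by (metis add_le_mono card_Un_le le_refl order_trans)
  finally have "card P \<le> card P0 + card HC + card HR" .
  moreover have "card HC < t" unfolding HC_def using heavy_few[OF C] .
  moreover have "card HR < t" unfolding HR_def using heavy_few[OF R] .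
  ultimately have s3: "2*t*t + 1 \<le> card P0" using P(2) by linarith
  have big: "card C + 1 \<le> 2*t*card {c\<in>C. heavy w (L c)}" if "w \<in> P0" for w
  proof -
    have "w \<in> P" "w \<in> V" using that P(1) unfolding P0_def by auto
    then have "\<not> heavy w C" "\<not> heavy w R" using that unfolding P0_def HC_def HR_def by auto
    then show ?thesis using neg \<open>w \<in> P\<close> by force
  qed
  have "(\<Sum>w\<in>P0. card C + 1) \<le> (\<Sum>w\<in>P0. 2*t*card {c\<in>C. heavy w (L c)})"
    using big by (rule sum_mono)
  then have s1: "card P0 * (card C + 1) \<le> 2*t*(\<Sum>w\<in>P0. card {c\<in>C. heavy w (L c)})"
    by (simp add: sum_distrib_left)
  have "(\<Sum>w\<in>P0. card {c\<in>C. heavy w (L c)}) = (\<Sum>c\<in>C. card {w\<in>P0. heavy w (L c)})"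
    using finP0 finC by (rule double_count)
  also have "\<dots> \<le> (\<Sum>c\<in>C. t)"
  proof (rule sum_mono)
    fix c assume "c \<in> C"
    have "{w\<in>P0. heavy w (L c)} \<subseteq> {w\<in>V. heavy w (L c)}" using P(1) unfolding P0_def by blast
    then have "card {w\<in>P0. heavy w (L c)} \<le> card {w\<in>V. heavy w (L c)}"
      using fin[of "{w\<in>V. heavy w (L c)}"] by (intro card_mono) auto
    also have "\<dots> < t" using heavy_few L \<open>c \<in> C\<close> by blast
    finally show "card {w\<in>P0. heavy w (L c)} \<le> t" by simp
  qed
  finally have s2: "(\<Sum>w\<in>P0. card {c\<in>C. heavy w (L c)}) \<le> t * card C" by (simp add: mult.commute)
  have "(2*t*t+1) * (card C + 1) \<le> card P0 * (card C + 1)" using s3 by (rule mult_right_mono) simp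
  also have "\<dots> \<le> 2*t*(\<Sum>w\<in>P0. card {c\<in>C. heavy w (L c)})" by (rule s1)
  also have "\<dots> \<le> 2*t*(t * card C)" using s2 by (rule mult_left_mono) simp
  finally show False by (simp add: algebra_simps)
qed

lemma card_le_Suc_remove: "finite A \<Longrightarrow> card A \<le> Suc (card (A - {w}))"
proof (cases "w \<in> A")
  case True
  assume "finite A" then show ?thesis using card.remove[OF \<open>finite A\<close> True] by simp
next
  case False then show ?thesis by simp
qed

lemma shrinkS:
  assumes "\<not> heavy w S" "S \<subseteq> V" "t*(Q+2) \<le> card S"
  shows "Q \<le> card (S - Nb w - {w})"
proof -
  have "finite S" using assms(2) fin by blast
  have a: "card S < t * (card (S - Nb w) + 1)" using assms(1) unfolding heavy_def by (simp add: algebra_simps)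
  have "card (S - Nb w) \<le> Suc (card (S - Nb w - {w}))" using \<open>finite S\<close> by (intro card_le_Suc_remove) simp
  then have "t * (card (S - Nb w) + 1) \<le> t * (card (S - Nb w - {w}) + 2)" by (intro mult_left_mono) auto
  then have "t*(Q+2) < t * (card (S - Nb w - {w}) + 2)" using a assms(3) by linarith
  then have "Q + 2 < card (S - Nb w - {w}) + 2" by simp
  then show ?thesis by simp
qed

lemma shrinkC:
  assumes "\<not> heavy w C" "C \<subseteq> V" "2*t*card {c\<in>C. heavy w (L c)} \<le> card C" "2*t*(M+2) \<le> card C"
  shows "M \<le> card {c\<in>C. c \<notin> Nb w \<and> c \<noteq> w \<and> \<not> heavy w (L c)}"
proof -
  define C' where "C' = {c\<in>C. c \<notin> Nb w \<and> c \<noteq> w \<and> \<not> heavy w (L c)}"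
  define Hh where "Hh = {c\<in>C. heavy w (L c)}"
  have "finite C" using assms(2) fin by blast
  then have fC': "finite C'" "finite Hh" unfolding C'_def Hh_def by auto
  have "C - Nb w \<subseteq> insert w (C' \<union> Hh)" unfolding C'_def Hh_def by blast
  then have "card (C - Nb w) \<le> card (insert w (C' \<union> Hh))" using fC' by (intro card_mono) auto
  also have "\<dots> \<le> Suc (card (C' \<union> Hh))" using fC' by (simp add: card_insert_if)
  also have "\<dots> \<le> Suc (card C' + card Hh)" using card_Un_le by simp
  finally have b: "card (C - Nb w) \<le> Suc (card C' + card Hh)" .
  have a: "card C < t * (card (C - Nb w) + 1)" using assms(1) unfolding heavy_def by (simp add: algebra_simps)
  have "t * (card (C - Nb w) + 1) \<le> t * (card C' + 2 + card Hh)" using b by (intro mult_left_mono) auto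
  then have "card C < t * (card C' + 2) + t * card Hh" using a by (simp add: algebra_simps)
  then have "2 * card C < 2*t * (card C' + 2) + 2*t * card Hh" by simp
  then have "card C < 2*t * (card C' + 2)" using assms(3) unfolding Hh_def by linarith
  then have "2*t*(M+2) < 2*t * (card C' + 2)" using assms(4) by linarith
  then have "M + 2 < card C' + 2" by simp
  then show ?thesis unfolding C'_def by simp
qed

end

context core begin

lemma isf_extend:
  assumes isf': "isf n E V k \<phi>'" and img': "\<phi>' ` ({0..<k} \<times> {0..<1+n}) \<subseteq> Rest"
  and RestV: "Rest \<subseteq> V" and wV: "w \<in> V"
  and e: "bij_betw e {1..n} \<Lambda>" and \<Lambda>N: "\<Lambda> \<subseteq> Nb w" and ind: "indep \<Lambda> E"
  and sep: "\<forall>x\<in>Rest. \<forall>y\<in>insert w \<Lambda>. x \<noteq> y \<and> {y,x} \<notin> E"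
  shows "isf n E V (Suc k) (\<lambda>(i,a). if i = 0 then (if a = 0 then w else e a) else \<phi>' (i - 1, a))"
proof -
  define \<phi> where "\<phi> = (\<lambda>(i,a). if i = 0 then (if a = 0 then w else e a) else \<phi>' (i - 1, a))"
  let ?D = "{0..<k} \<times> {0..<1+n}"
  let ?D' = "{0..<Suc k} \<times> {0..<1+n}"
  note H = isf'[unfolded isf_def]
  have inj': "inj_on \<phi>' ?D" using H by (rule conjunct1)
  have adj': "\<forall>p\<in>?D. \<forall>q\<in>?D. {\<phi>' p, \<phi>' q} \<in> E \<longleftrightarrow> fst p = fst q \<and> ((snd p = 0) \<noteq> (snd q = 0))"
    using H by (rule conjunct2[OF conjunct2])
  have \<Lambda>V: "\<Lambda> \<subseteq> V" using \<Lambda>N unfolding Nb_def by blast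
  have adjw: "l \<in> \<Lambda> \<Longrightarrow> {w,l} \<in> E" for l using \<Lambda>N unfolding Nb_def by blast
  have w\<Lambda>: "w \<notin> \<Lambda>" using adjw noloop by blast
  have e\<Lambda>: "a \<noteq> 0 \<Longrightarrow> a < 1 + n \<Longrightarrow> e a \<in> \<Lambda>" for a using e unfolding bij_betw_def by auto
  have einj: "a \<noteq> 0 \<Longrightarrow> a < 1 + n \<Longrightarrow> b \<noteq> 0 \<Longrightarrow> b < 1 + n \<Longrightarrow> e a = e b \<Longrightarrow> a = b" for a b
  proof -
    assume h: "a \<noteq> 0" "a < 1 + n" "b \<noteq> 0" "b < 1 + n" "e a = e b"
    have I: "inj_on e {1..n}" using e unfolding bij_betw_def by (rule conjunct1)
    have A: "a \<in> {1..n}" "b \<in> {1..n}" using h by auto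
    show "a = b" by (rule inj_onD[OF I h(5) A])
  qed
  have \<phi>0: "\<phi> (0,0) = w" unfolding \<phi>_def by simp
  have \<phi>a: "a \<noteq> 0 \<Longrightarrow> \<phi> (0,a) = e a" for a unfolding \<phi>_def by simp
  have inS0: "\<phi> (0,a) \<in> insert w \<Lambda>" if "a < 1 + n" for a
  proof (cases "a = 0")
    case True then show ?thesis using \<phi>0 by simp
  next
    case False then show ?thesis using \<phi>a e\<Lambda> that by simp
  qed
  have inR: "\<phi> p = \<phi>' (fst p - 1, snd p) \<and> (fst p - 1, snd p) \<in> ?D \<and> \<phi> p \<in> Rest"
    if "p \<in> ?D'" "fst p \<noteq> 0" for p
  proof -
    obtain i a where p: "p = (i,a)" by fastforce
    have "(i - 1, a) \<in> ?D" using that p by auto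
    moreover have "\<phi> p = \<phi>' (i - 1, a)" using that p unfolding \<phi>_def by simp
    ultimately show ?thesis using img' p by auto
  qed
  have sep': "x \<in> Rest \<Longrightarrow> y \<in> insert w \<Lambda> \<Longrightarrow> x \<noteq> y \<and> {y,x} \<notin> E \<and> {x,y} \<notin> E" for x y
  proof -
    assume "x \<in> Rest" "y \<in> insert w \<Lambda>"
    then have "x \<noteq> y \<and> {y,x} \<notin> E" using sep by blast
    moreover have "{x,y} = {y,x}" by (rule insert_commute)
    ultimately show ?thesis by simp
  qed
  have inj: "inj_on \<phi> ?D'"
  proof (rule inj_onI)
    fix p q assume pq: "p \<in> ?D'" "q \<in> ?D'" "\<phi> p = \<phi> q"
    obtain i a where p: "p = (i,a)" by fastforce
    obtain j b where q: "q = (j,b)" by fastforce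
    have ab: "a < 1 + n" "b < 1 + n" using pq p q by auto
    show "p = q"
    proof (cases "i = 0"; cases "j = 0")
      assume ij: "i = 0" "j = 0"
      show ?thesis
      proof (cases "a = 0"; cases "b = 0")
        assume "a = 0" "b = 0" then show ?thesis using ij p q by simp
      next
        assume "a = 0" "b \<noteq> 0"
        then have "w = e b" using pq(3) \<phi>0 \<phi>a ij p q by simp
        then show ?thesis using e\<Lambda>[OF \<open>b \<noteq> 0\<close> ab(2)] w\<Lambda> by simp
      next
        assume "a \<noteq> 0" "b = 0"
        then have "w = e a" using pq(3) \<phi>0 \<phi>a ij p q by simp
        then show ?thesis using e\<Lambda>[OF \<open>a \<noteq> 0\<close> ab(1)] w\<Lambda> by simp
      next
        assume "a \<noteq> 0" "b \<noteq> 0"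
        then have "e a = e b" using pq(3) \<phi>a ij p q by simp
        then show ?thesis using einj \<open>a \<noteq> 0\<close> \<open>b \<noteq> 0\<close> ab ij p q by simp
      qed
    next
      assume ij: "i = 0" "j \<noteq> 0"
      have fstq: "fst q \<noteq> 0" using ij q by simp
      have "\<phi> p \<in> insert w \<Lambda>" using inS0 ab ij p by simp
      moreover have "\<phi> q \<in> Rest" using inR[OF pq(2) fstq] by blast
      ultimately show ?thesis using sep' pq(3) by metis
    next
      assume ij: "i \<noteq> 0" "j = 0"
      have fstp: "fst p \<noteq> 0" using ij p by simp
      have "\<phi> q \<in> insert w \<Lambda>" using inS0 ab ij q by simp
      moreover have "\<phi> p \<in> Rest" using inR[OF pq(1) fstp] by blast
      ultimately show ?thesis using sep' pq(3) by metis
    next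
      assume ij: "i \<noteq> 0" "j \<noteq> 0"
      have "\<phi>' (i - 1, a) = \<phi>' (j - 1, b)" "(i - 1, a) \<in> ?D" "(j - 1, b) \<in> ?D"
        using inR[OF pq(1)] inR[OF pq(2)] pq(3) ij p q by auto
      then have "(i - 1, a) = (j - 1, b)" using inj' unfolding inj_on_def by blast
      then have "i - 1 = j - 1" "a = b" by simp_all
      then have "i = j" "a = b" using ij by arith+
      then show ?thesis using p q by simp
    qed
  qed
  have img: "\<phi> ` ?D' \<subseteq> V"
  proof
    fix y assume "y \<in> \<phi> ` ?D'"
    then obtain p where p: "p \<in> ?D'" "y = \<phi> p" by blast
    obtain i a where pia: "p = (i,a)" by fastforce
    show "y \<in> V"
    proof (cases "i = 0")
      case True
      then have "y \<in> insert w \<Lambda>" using inS0 p pia by auto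
      then show ?thesis using wV \<Lambda>V by blast
    next
      case False
      then have "y \<in> Rest" using inR[OF p(1)] p pia by auto
      then show ?thesis using RestV by blast
    qed
  qed
  have adj: "{\<phi> p, \<phi> q} \<in> E \<longleftrightarrow> fst p = fst q \<and> ((snd p = 0) \<noteq> (snd q = 0))"
    if pq: "p \<in> ?D'" "q \<in> ?D'" for p q
  proof -
    obtain i a where p: "p = (i,a)" by fastforce
    obtain j b where q: "q = (j,b)" by fastforce
    have ab: "a < 1 + n" "b < 1 + n" using pq p q by auto
    show ?thesis
    proof (cases "i = 0"; cases "j = 0")
      assume ij: "i = 0" "j = 0"
      show ?thesis
      proof (cases "a = 0"; cases "b = 0")
        assume "a = 0" "b = 0" then show ?thesis using ij p q \<phi>0 noloop by simp
      next
        assume "a = 0" "b \<noteq> 0"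
        then have "{\<phi> p, \<phi> q} = {w, e b}" using \<phi>0 \<phi>a ij p q by simp
        moreover have "{w, e b} \<in> E" using adjw e\<Lambda>[OF \<open>b \<noteq> 0\<close> ab(2)] by blast
        ultimately show ?thesis using ij p q \<open>a = 0\<close> \<open>b \<noteq> 0\<close> by simp
      next
        assume "a \<noteq> 0" "b = 0"
        then have "{\<phi> p, \<phi> q} = {w, e a}" using \<phi>0 \<phi>a ij p q by (simp add: insert_commute)
        moreover have "{w, e a} \<in> E" using adjw e\<Lambda>[OF \<open>a \<noteq> 0\<close> ab(1)] by blast
        ultimately show ?thesis using ij p q \<open>a \<noteq> 0\<close> \<open>b = 0\<close> by simp
      next
        assume "a \<noteq> 0" "b \<noteq> 0"
        then have "{\<phi> p, \<phi> q} = {e a, e b}" using \<phi>a ij p q by simp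
        moreover have "{e a, e b} \<notin> E"
        proof (cases "e a = e b")
          case True then show ?thesis using noloop by simp
        next
          case False
          moreover have "e a \<in> \<Lambda>" "e b \<in> \<Lambda>" using e\<Lambda> \<open>a \<noteq> 0\<close> \<open>b \<noteq> 0\<close> ab by auto
          ultimately show ?thesis using ind unfolding indep_def by blast
        qed
        ultimately show ?thesis using ij p q \<open>a \<noteq> 0\<close> \<open>b \<noteq> 0\<close> by simp
      qed
    next
      assume ij: "i = 0" "j \<noteq> 0"
      have fstq: "fst q \<noteq> 0" using ij q by simp
      have "\<phi> p \<in> insert w \<Lambda>" using inS0 ab ij p by simp
      moreover have "\<phi> q \<in> Rest" using inR[OF pq(2) fstq] by blast
      ultimately have "{\<phi> p, \<phi> q} \<notin> E" using sep' by blast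
      then show ?thesis using ij p q by simp
    next
      assume ij: "i \<noteq> 0" "j = 0"
      have fstp: "fst p \<noteq> 0" using ij p by simp
      have "\<phi> q \<in> insert w \<Lambda>" using inS0 ab ij q by simp
      moreover have "\<phi> p \<in> Rest" using inR[OF pq(1) fstp] by blast
      ultimately have "{\<phi> p, \<phi> q} \<notin> E" using sep' by blast
      then show ?thesis using ij p q by simp
    next
      assume ij: "i \<noteq> 0" "j \<noteq> 0"
      have "\<phi> p = \<phi>' (i - 1, a)" "\<phi> q = \<phi>' (j - 1, b)" "(i - 1, a) \<in> ?D" "(j - 1, b) \<in> ?D"
        using inR[OF pq(1)] inR[OF pq(2)] ij p q by auto
      then have "{\<phi> p, \<phi> q} \<in> E \<longleftrightarrow> i - 1 = j - 1 \<and> ((a = 0) \<noteq> (b = 0))"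
        using adj' by simp
      then show ?thesis using ij p q by auto
    qed
  qed
  show ?thesis unfolding isf_def \<phi>_def[symmetric]
  proof (intro conjI ballI)
    show "inj_on \<phi> ?D'" by (rule inj)
    show "\<phi> ` ?D' \<subseteq> V" by (rule img)
    fix p q assume "p \<in> ?D'" "q \<in> ?D'"
    then show "{\<phi> p, \<phi> q} \<in> E \<longleftrightarrow> fst p = fst q \<and> ((snd p = 0) \<noteq> (snd q = 0))" by (rule adj)
  qed
qed

end

fun lrho :: "nat \<Rightarrow> nat \<Rightarrow> nat" where
  "lrho t 0 = 0"
| "lrho t (Suc j) = max (2*t*t+2*t+1) (t*(lrho t j + 2))"

fun lmu :: "nat \<Rightarrow> nat \<Rightarrow> nat \<Rightarrow> nat" where
  "lmu t M 0 = M"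
| "lmu t M (Suc j) = 2*t*(lmu t M j + 2)"

fun lq :: "nat \<Rightarrow> nat \<Rightarrow> nat \<Rightarrow> nat" where
  "lq t Q 0 = Q"
| "lq t Q (Suc j) = t*(lq t Q j + 2)"

context core begin

lemma leaves:
  "R \<subseteq> V \<Longrightarrow> C \<subseteq> V \<Longrightarrow> (\<forall>c\<in>C. L c \<subseteq> V) \<Longrightarrow> lrho t j \<le> card R \<Longrightarrow> lmu t M j \<le> card C \<Longrightarrow>
   (\<forall>c\<in>C. lq t Q j \<le> card (L c)) \<Longrightarrow>
   \<exists>\<Lambda> C' L'. \<Lambda> \<subseteq> R \<and> card \<Lambda> = j \<and> indep \<Lambda> E \<and> C' \<subseteq> C \<and> M \<le> card C' \<and>
     (\<forall>c\<in>C'. L' c \<subseteq> L c \<and> Q \<le> card (L' c)) \<and>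
     (\<forall>x\<in>C'. \<forall>l\<in>\<Lambda>. x \<noteq> l \<and> {l,x} \<notin> E) \<and>
     (\<forall>c\<in>C'. \<forall>x\<in>L' c. \<forall>l\<in>\<Lambda>. x \<noteq> l \<and> {l,x} \<notin> E)"
proof (induction j arbitrary: R C L)
  case 0
  show ?case
    apply (rule exI[of _ "{}"], rule exI[of _ C], rule exI[of _ L])
    using "0.prems" by simp
next
  case (Suc j)
  have pool: "2*t*t + 2*t + 1 \<le> card R" using Suc.prems(4) by simp
  obtain w where w: "w \<in> R" "\<not> heavy w C" "\<not> heavy w R" "2*t*card {c\<in>C. heavy w (L c)} \<le> card C"
    using pick[OF Suc.prems(1) pool Suc.prems(2) Suc.prems(1) Suc.prems(3)] by blast
  define R1 where "R1 = R - Nb w - {w}"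
  define C1 where "C1 = {c\<in>C. c \<notin> Nb w \<and> c \<noteq> w \<and> \<not> heavy w (L c)}"
  define L1 where "L1 c = L c - Nb w - {w}" for c
  have R1V: "R1 \<subseteq> V" using Suc.prems(1) unfolding R1_def by blast
  have C1V: "C1 \<subseteq> V" using Suc.prems(2) unfolding C1_def by blast
  have C1C: "C1 \<subseteq> C" unfolding C1_def by blast
  have L1V: "\<forall>c\<in>C1. L1 c \<subseteq> V" using Suc.prems(3) C1C unfolding L1_def by blast
  have sR1: "lrho t j \<le> card R1" unfolding R1_def
    by (rule shrinkS[OF w(3) Suc.prems(1)]) (use Suc.prems(4) in simp)
  have sC1: "lmu t M j \<le> card C1" unfolding C1_def
    by (rule shrinkC[OF w(2) Suc.prems(2) w(4)]) (use Suc.prems(5) in simp)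
  have sL1: "\<forall>c\<in>C1. lq t Q j \<le> card (L1 c)"
  proof
    fix c assume c: "c \<in> C1"
    then have "\<not> heavy w (L c)" "c \<in> C" unfolding C1_def by auto
    then show "lq t Q j \<le> card (L1 c)" unfolding L1_def
      using shrinkS[of w "L c" "lq t Q j"] Suc.prems(3,6) by simp
  qed
  have ex: "\<exists>\<Lambda> C' L'. \<Lambda> \<subseteq> R1 \<and> card \<Lambda> = j \<and> indep \<Lambda> E \<and> C' \<subseteq> C1 \<and> M \<le> card C' \<and>
     (\<forall>c\<in>C'. L' c \<subseteq> L1 c \<and> Q \<le> card (L' c)) \<and>
     (\<forall>x\<in>C'. \<forall>l\<in>\<Lambda>. x \<noteq> l \<and> {l,x} \<notin> E) \<and>
     (\<forall>c\<in>C'. \<forall>x\<in>L' c. \<forall>l\<in>\<Lambda>. x \<noteq> l \<and> {l,x} \<notin> E)"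
    by (rule Suc.IH[OF R1V C1V L1V sR1 sC1 sL1])
  then obtain \<Lambda> C' L' where IHc: "\<Lambda> \<subseteq> R1 \<and> card \<Lambda> = j \<and> indep \<Lambda> E \<and> C' \<subseteq> C1 \<and> M \<le> card C' \<and>
     (\<forall>c\<in>C'. L' c \<subseteq> L1 c \<and> Q \<le> card (L' c)) \<and>
     (\<forall>x\<in>C'. \<forall>l\<in>\<Lambda>. x \<noteq> l \<and> {l,x} \<notin> E) \<and>
     (\<forall>c\<in>C'. \<forall>x\<in>L' c. \<forall>l\<in>\<Lambda>. x \<noteq> l \<and> {l,x} \<notin> E)"
    by (elim exE)
  have IH: "\<Lambda> \<subseteq> R1" "card \<Lambda> = j" "indep \<Lambda> E" "C' \<subseteq> C1" "M \<le> card C'"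
     "\<forall>c\<in>C'. L' c \<subseteq> L1 c \<and> Q \<le> card (L' c)"
     "\<forall>x\<in>C'. \<forall>l\<in>\<Lambda>. x \<noteq> l \<and> {l,x} \<notin> E"
     "\<forall>c\<in>C'. \<forall>x\<in>L' c. \<forall>l\<in>\<Lambda>. x \<noteq> l \<and> {l,x} \<notin> E"
    using IHc by simp_all
  have wR1: "w \<notin> R1" unfolding R1_def by blast
  have fin\<Lambda>: "finite \<Lambda>" using IH(1) R1V fin by blast
  have nadj: "x \<in> V \<Longrightarrow> x \<notin> Nb w \<Longrightarrow> {w,x} \<notin> E" for x unfolding Nb_def by blast
  show ?case
    apply (rule exI[of _ "insert w \<Lambda>"], rule exI[of _ C'], rule exI[of _ L'])
  proof (intro conjI)
    show "insert w \<Lambda> \<subseteq> R" using w(1) IH(1) unfolding R1_def by blast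
    have "w \<notin> \<Lambda>" using IH(1) wR1 by blast
    then show "card (insert w \<Lambda>) = Suc j" using fin\<Lambda> IH(2) by simp
    show "indep (insert w \<Lambda>) E" unfolding indep_def
    proof (intro ballI impI)
      fix u v assume uv: "u \<in> insert w \<Lambda>" "v \<in> insert w \<Lambda>" "u \<noteq> v"
      show "{u, v} \<notin> E"
      proof (cases "u = w")
        case True
        then have "v \<in> \<Lambda>" using uv by blast
        then have "v \<in> V" "v \<notin> Nb w" using IH(1) R1V unfolding R1_def by auto
        then show ?thesis using nadj True by blast
      next
        case False
        then have u: "u \<in> \<Lambda>" using uv by blast
        show ?thesis
        proof (cases "v = w")
          case True
          have "u \<in> V" "u \<notin> Nb w" using u IH(1) R1V unfolding R1_def by auto
          then have "{w,u} \<notin> E" using nadj by blast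
          then show ?thesis using True by (simp add: insert_commute)
        next
          case False
          then have "v \<in> \<Lambda>" using uv by blast
          then show ?thesis using u uv(3) IH(3) unfolding indep_def by blast
        qed
      qed
    qed
    show "C' \<subseteq> C" using IH(4) C1C by blast
    show "M \<le> card C'" by (rule IH(5))
    show "\<forall>c\<in>C'. L' c \<subseteq> L c \<and> Q \<le> card (L' c)" using IH(6) unfolding L1_def by blast
    show "\<forall>x\<in>C'. \<forall>l\<in>insert w \<Lambda>. x \<noteq> l \<and> {l,x} \<notin> E"
    proof (intro ballI)
      fix x l assume x: "x \<in> C'" and l: "l \<in> insert w \<Lambda>"
      show "x \<noteq> l \<and> {l,x} \<notin> E"
      proof (cases "l = w")
        case True
        have "x \<in> C1" using x IH(4) by blast
        then have "x \<in> V" "x \<notin> Nb w" "x \<noteq> w" using C1V unfolding C1_def by auto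
        then show ?thesis using nadj True by blast
      next
        case False then show ?thesis using IH(7) x l by blast
      qed
    qed
    show "\<forall>c\<in>C'. \<forall>x\<in>L' c. \<forall>l\<in>insert w \<Lambda>. x \<noteq> l \<and> {l,x} \<notin> E"
    proof (intro ballI)
      fix c x l assume c: "c \<in> C'" and x: "x \<in> L' c" and l: "l \<in> insert w \<Lambda>"
      show "x \<noteq> l \<and> {l,x} \<notin> E"
      proof (cases "l = w")
        case True
        have "c \<in> C1" using c IH(4) by blast
        then have "x \<in> L1 c" using IH(6) c x by blast
        moreover have "L1 c \<subseteq> V" using L1V \<open>c \<in> C1\<close> by blast
        ultimately have "x \<in> V" "x \<notin> Nb w" "x \<noteq> w" unfolding L1_def by auto
        then show ?thesis using nadj True by blast
      next
        case False then show ?thesis using IH(8) c x l by blast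
      qed
    qed
  qed
qed

end

fun bmu :: "nat \<Rightarrow> nat \<Rightarrow> nat \<Rightarrow> nat" where
  "bmu t n 0 = 0"
| "bmu t n (Suc k) = max (2*t*t+2*t+1) (2*t*(lmu t (bmu t n k) n + 2))"

fun bq :: "nat \<Rightarrow> nat \<Rightarrow> nat \<Rightarrow> nat" where
  "bq t n 0 = 0"
| "bq t n (Suc k) = max (lrho t n) (t*(lq t (bq t n k) n + 2))"

context core begin

lemma build:
  "C \<subseteq> V \<Longrightarrow> (\<forall>c\<in>C. L c \<subseteq> Nb c) \<Longrightarrow> bmu t n k \<le> card C \<Longrightarrow> (\<forall>c\<in>C. bq t n k \<le> card (L c)) \<Longrightarrow>
   \<exists>\<phi>. isf n E V k \<phi> \<and> \<phi> ` ({0..<k} \<times> {0..<1+n}) \<subseteq> C \<union> (\<Union>c\<in>C. L c)"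
proof (induction k arbitrary: C L)
  case 0
  show ?case by (rule exI[of _ "\<lambda>_. 0"]) (simp add: isf_def)
next
  case (Suc k)
  have NbV: "Nb c \<subseteq> V" for c unfolding Nb_def by blast
  have LV: "\<forall>c\<in>C. L c \<subseteq> V" using Suc.prems(2) NbV by blast
  have pool: "2*t*t + 2*t + 1 \<le> card C" using Suc.prems(3) by simp
  obtain w where w: "w \<in> C" "\<not> heavy w C" "2*t*card {c\<in>C. heavy w (L c)} \<le> card C"
    using pick[OF Suc.prems(1) pool Suc.prems(1) Suc.prems(1) LV] by blast
  have wV: "w \<in> V" using w(1) Suc.prems(1) by blast
  define C1 where "C1 = {c\<in>C. c \<notin> Nb w \<and> c \<noteq> w \<and> \<not> heavy w (L c)}"
  define L1 where "L1 c = L c - Nb w - {w}" for c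
  have C1C: "C1 \<subseteq> C" unfolding C1_def by blast
  have C1V: "C1 \<subseteq> V" using Suc.prems(1) C1C by blast
  have L1V: "\<forall>c\<in>C1. L1 c \<subseteq> V" using LV C1C unfolding L1_def by blast
  have sC1: "lmu t (bmu t n k) n \<le> card C1" unfolding C1_def
    by (rule shrinkC[OF w(2) Suc.prems(1) w(3)]) (use Suc.prems(3) in simp)
  have sL1: "\<forall>c\<in>C1. lq t (bq t n k) n \<le> card (L1 c)"
  proof
    fix c assume c: "c \<in> C1"
    then have h: "\<not> heavy w (L c)" "c \<in> C" unfolding C1_def by auto
    have "t * (lq t (bq t n k) n + 2) \<le> card (L c)" using Suc.prems(4) h(2) by simp
    then show "lq t (bq t n k) n \<le> card (L1 c)" unfolding L1_def
      using shrinkS[OF h(1)] LV h(2) by blast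
  qed
  have RV: "L w \<subseteq> V" using LV w(1) by blast
  have sR: "lrho t n \<le> card (L w)" using Suc.prems(4) w(1) by simp
  have ex: "\<exists>\<Lambda> C' L'. \<Lambda> \<subseteq> L w \<and> card \<Lambda> = n \<and> indep \<Lambda> E \<and> C' \<subseteq> C1 \<and> bmu t n k \<le> card C' \<and>
     (\<forall>c\<in>C'. L' c \<subseteq> L1 c \<and> bq t n k \<le> card (L' c)) \<and>
     (\<forall>x\<in>C'. \<forall>l\<in>\<Lambda>. x \<noteq> l \<and> {l,x} \<notin> E) \<and>
     (\<forall>c\<in>C'. \<forall>x\<in>L' c. \<forall>l\<in>\<Lambda>. x \<noteq> l \<and> {l,x} \<notin> E)"
    by (rule leaves[OF RV C1V L1V sR sC1 sL1])
  then obtain \<Lambda> C2 L2 where Lc: "\<Lambda> \<subseteq> L w \<and> card \<Lambda> = n \<and> indep \<Lambda> E \<and> C2 \<subseteq> C1 \<and> bmu t n k \<le> card C2 \<and>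
     (\<forall>c\<in>C2. L2 c \<subseteq> L1 c \<and> bq t n k \<le> card (L2 c)) \<and>
     (\<forall>x\<in>C2. \<forall>l\<in>\<Lambda>. x \<noteq> l \<and> {l,x} \<notin> E) \<and>
     (\<forall>c\<in>C2. \<forall>x\<in>L2 c. \<forall>l\<in>\<Lambda>. x \<noteq> l \<and> {l,x} \<notin> E)"
    by (elim exE)
  have LL: "\<Lambda> \<subseteq> L w" "card \<Lambda> = n" "indep \<Lambda> E" "C2 \<subseteq> C1" "bmu t n k \<le> card C2"
     "\<forall>c\<in>C2. L2 c \<subseteq> L1 c \<and> bq t n k \<le> card (L2 c)"
     "\<forall>x\<in>C2. \<forall>l\<in>\<Lambda>. x \<noteq> l \<and> {l,x} \<notin> E"
     "\<forall>c\<in>C2. \<forall>x\<in>L2 c. \<forall>l\<in>\<Lambda>. x \<noteq> l \<and> {l,x} \<notin> E"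
    using Lc by simp_all
  have C2V: "C2 \<subseteq> V" using LL(4) C1V by blast
  have L2N: "\<forall>c\<in>C2. L2 c \<subseteq> Nb c"
  proof
    fix c assume c: "c \<in> C2"
    then have "L2 c \<subseteq> L1 c" "c \<in> C" using LL(6) LL(4) C1C by blast+
    then show "L2 c \<subseteq> Nb c" using Suc.prems(2) unfolding L1_def by blast
  qed
  have sL2: "\<forall>c\<in>C2. bq t n k \<le> card (L2 c)" using LL(6) by blast
  have ex2: "\<exists>\<phi>. isf n E V k \<phi> \<and> \<phi> ` ({0..<k} \<times> {0..<1+n}) \<subseteq> C2 \<union> (\<Union>c\<in>C2. L2 c)"
    by (rule Suc.IH[OF C2V L2N LL(5) sL2])
  then obtain \<phi>' where \<phi>': "isf n E V k \<phi>'" "\<phi>' ` ({0..<k} \<times> {0..<1+n}) \<subseteq> C2 \<union> (\<Union>c\<in>C2. L2 c)"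
    by blast
  have fin\<Lambda>: "finite \<Lambda>" using LL(1) RV fin by blast
  obtain e where e: "bij_betw e {1..n} \<Lambda>" using ex_bij_betw_nat_finite_1[OF fin\<Lambda>] LL(2) by metis
  define Rest where "Rest = C2 \<union> (\<Union>c\<in>C2. L2 c)"
  have RestV: "Rest \<subseteq> V" unfolding Rest_def using C2V L2N NbV by blast
  have \<Lambda>N: "\<Lambda> \<subseteq> Nb w" using LL(1) Suc.prems(2) w(1) by blast
  have nadj: "x \<in> V \<Longrightarrow> x \<notin> Nb w \<Longrightarrow> {w,x} \<notin> E" for x unfolding Nb_def by blast
  have sep: "\<forall>x\<in>Rest. \<forall>y\<in>insert w \<Lambda>. x \<noteq> y \<and> {y,x} \<notin> E"
  proof (intro ballI)
    fix x y assume x: "x \<in> Rest" and y: "y \<in> insert w \<Lambda>"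
    show "x \<noteq> y \<and> {y,x} \<notin> E"
    proof (cases "y = w")
      case True
      have "x \<in> V" using x RestV by blast
      moreover have "x \<notin> Nb w \<and> x \<noteq> w"
      proof (cases "x \<in> C2")
        case True
        then have "x \<in> C1" using LL(4) by blast
        then show ?thesis unfolding C1_def by blast
      next
        case False
        then obtain c where "c \<in> C2" "x \<in> L2 c" using x unfolding Rest_def by blast
        then have "x \<in> L1 c" using LL(6) by blast
        then show ?thesis unfolding L1_def by blast
      qed
      ultimately show ?thesis using nadj True by blast
    next
      case False
      then have y\<Lambda>: "y \<in> \<Lambda>" using y by blast
      show ?thesis
      proof (cases "x \<in> C2")
        case True
        then show ?thesis using LL(7) y\<Lambda> by blast
      next
        case False
        then obtain c where "c \<in> C2" "x \<in> L2 c" using x unfolding Rest_def by blast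
        then show ?thesis using LL(8) y\<Lambda> by blast
      qed
    qed
  qed
  have img': "\<phi>' ` ({0..<k} \<times> {0..<1+n}) \<subseteq> Rest" using \<phi>'(2) unfolding Rest_def .
  define \<phi> where "\<phi> = (\<lambda>(i,a). if i = 0 then (if a = 0 then w else e a) else \<phi>' (i - 1, a))"
  have isf: "isf n E V (Suc k) \<phi>" unfolding \<phi>_def
    by (rule isf_extend[OF \<phi>'(1) img' RestV wV e \<Lambda>N LL(3) sep])
  have RestC: "Rest \<subseteq> C \<union> (\<Union>c\<in>C. L c)"
  proof
    fix x assume "x \<in> Rest"
    then show "x \<in> C \<union> (\<Union>c\<in>C. L c)"
    proof (cases "x \<in> C2")
      case True then show ?thesis using LL(4) C1C by blast
    next
      case False
      then obtain c where c: "c \<in> C2" "x \<in> L2 c" using \<open>x \<in> Rest\<close> unfolding Rest_def by blast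
      then have "x \<in> L1 c" "c \<in> C" using LL(6) LL(4) C1C by blast+
      then show ?thesis unfolding L1_def by blast
    qed
  qed
  have img: "\<phi> ` ({0..<Suc k} \<times> {0..<1+n}) \<subseteq> C \<union> (\<Union>c\<in>C. L c)"
  proof
    fix y assume "y \<in> \<phi> ` ({0..<Suc k} \<times> {0..<1+n})"
    then obtain i a where ia: "i < Suc k" "a < 1 + n" "y = \<phi> (i,a)" by auto
    show "y \<in> C \<union> (\<Union>c\<in>C. L c)"
    proof (cases "i = 0")
      case True
      show ?thesis
      proof (cases "a = 0")
        case True
        then show ?thesis using ia \<open>i = 0\<close> w(1) unfolding \<phi>_def by simp
      next
        case False
        then have "a \<in> {1..n}" using ia by auto
        then have "e a \<in> \<Lambda>" using e unfolding bij_betw_def by blast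
        then have "e a \<in> L w" using LL(1) by blast
        then show ?thesis using ia \<open>i = 0\<close> False w(1) unfolding \<phi>_def by auto
      qed
    next
      case False
      then have "y = \<phi>' (i - 1, a)" "(i - 1, a) \<in> {0..<k} \<times> {0..<1+n}"
        using ia unfolding \<phi>_def by auto
      then have "y \<in> Rest" using img' by blast
      then show ?thesis using RestC by blast
    qed
  qed
  show ?case using isf img by blast
qed

lemma core_bound: "card {v\<in>V. bq t n n \<le> card (Nb v)} < bmu t n n"
proof (rule ccontr)
  assume "\<not> ?thesis"
  then have "bmu t n n \<le> card {v\<in>V. bq t n n \<le> card (Nb v)}" by simp
  moreover have "{v\<in>V. bq t n n \<le> card (Nb v)} \<subseteq> V" by blast
  moreover have "\<forall>c\<in>{v\<in>V. bq t n n \<le> card (Nb v)}. Nb c \<subseteq> Nb c" by blast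
  moreover have "\<forall>c\<in>{v\<in>V. bq t n n \<le> card (Nb v)}. bq t n n \<le> card (Nb c)" by blast
  ultimately have "\<exists>\<phi>. isf n E V n \<phi> \<and> \<phi> ` ({0..<n} \<times> {0..<1+n}) \<subseteq>
      {v\<in>V. bq t n n \<le> card (Nb v)} \<union> (\<Union>c\<in>{v\<in>V. bq t n n \<le> card (Nb v)}. Nb c)"
    by (intro build) 
  then obtain \<phi> where "isf n E V n \<phi>" by blast
  then show False using nostar by blast
qed

end

lemma deg_lower_complete:
  assumes "x < N" shows "N - 1 \<le> degree (complete N) x"
proof (rule deg_ge[OF wf_complete, of "{0..<N} - {x}"])
  show "{0..<N} - {x} \<subseteq> fst (complete N)" unfolding complete_def by auto
  show "\<forall>y\<in>{0..<N} - {x}. {x, y} \<in> snd (complete N)" using edge_complete assms by auto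
  show "N - 1 \<le> card ({0..<N} - {x})" using assms by simp
qed

lemma deg_lower_bip:
  assumes "x < N" shows "N \<le> degree (complete_bip N N) x"
proof (rule deg_ge[OF wf_complete_bip, of "{N..<N+N}"])
  show "{N..<N+N} \<subseteq> fst (complete_bip N N)" unfolding complete_bip_def by auto
  show "\<forall>y\<in>{N..<N+N}. {x, y} \<in> snd (complete_bip N N)" using edge_bip assms by auto
  show "N \<le> card {N..<N+N}" by simp
qed

lemma deg_lower_copies:
  assumes "i < N" shows "N \<le> degree (copies N (complete_bip 1 N)) (prod_encode (i,0))"
proof (rule deg_ge[OF wf_copies[OF wf_complete_bip], of "(\<lambda>b. prod_encode (i,b)) ` {1..N}"])
  show "(\<lambda>b. prod_encode (i,b)) ` {1..N} \<subseteq> fst (copies N (complete_bip 1 N))"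
    unfolding fst_copies complete_bip_def using assms by auto
  show "\<forall>y\<in>(\<lambda>b. prod_encode (i,b)) ` {1..N}. {prod_encode (i,0), y} \<in> snd (copies N (complete_bip 1 N))"
    using edge_copies assms by auto
  have "inj_on (\<lambda>b. prod_encode (i,b)) {1..N}" by (auto simp: inj_on_def)
  then show "N \<le> card ((\<lambda>b. prod_encode (i,b)) ` {1..N})" by (simp add: card_image)
qed

lemma count_complete: "N \<le> card {v \<in> fst (complete N). degree (complete N) v \<ge> N - 1}"
proof (rule card_deg_ge[OF wf_complete, of "{0..<N}"])
  show "{0..<N} \<subseteq> fst (complete N)" unfolding complete_def by simp
  show "N \<le> card {0..<N}" by simp
  show "\<forall>x\<in>{0..<N}. N - 1 \<le> degree (complete N) x"
    by (intro ballI deg_lower_complete) simp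
qed

lemma count_bip: "N \<le> card {v \<in> fst (complete_bip N N). degree (complete_bip N N) v \<ge> N}"
proof (rule card_deg_ge[OF wf_complete_bip, of "{0..<N}"])
  show "{0..<N} \<subseteq> fst (complete_bip N N)" unfolding complete_bip_def by auto
qed (auto simp: deg_lower_bip)

lemma count_copies: "N \<le> card {v \<in> fst (copies N (complete_bip 1 N)). degree (copies N (complete_bip 1 N)) v \<ge> N}"
proof (rule card_deg_ge[OF wf_copies[OF wf_complete_bip], of "(\<lambda>i. prod_encode (i,0)) ` {0..<N}"])
  show "(\<lambda>i. prod_encode (i,0)) ` {0..<N} \<subseteq> fst (copies N (complete_bip 1 N))"
    unfolding fst_copies complete_bip_def by auto
  have "inj_on (\<lambda>i. prod_encode (i,0)) {0..<N}" by (auto simp: inj_on_def)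
  then show "N \<le> card ((\<lambda>i. prod_encode (i,0)) ` {0..<N})" by (simp add: card_image)
  show "\<forall>x\<in>(\<lambda>i. prod_encode (i,0)) ` {0..<N}. N \<le> degree (copies N (complete_bip 1 N)) x"
    using deg_lower_copies by auto
qed


lemma card_lt_mono: "finite B \<Longrightarrow> A \<subseteq> B \<Longrightarrow> card B < c \<Longrightarrow> card A < (c::nat)"
proof -
  assume a: "finite B" "A \<subseteq> B" "card B < c"
  have "card A \<le> card B" using a(1,2) by (rule card_mono)
  then show ?thesis using a(3) by linarith
qed

lemma card_lt_mono2: "card {v\<in>S. P v} < (c::nat) \<Longrightarrow> {v\<in>S. Q v} \<subseteq> {v\<in>S. P v} \<Longrightarrow> finite S \<Longrightarrow>
  card {v\<in>S. Q v} < c"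
  by (rule card_lt_mono[of "{v\<in>S. P v}"]) simp_all

theorem theorem1p12:
  fixes \<H> :: "graph set"
  assumes "\<forall>H\<in>\<H>. wf_graph H"
  shows "(\<exists>c1 c2 :: nat. \<forall>G. wf_graph G \<and> H_free \<H> G \<longrightarrow>
            card {v \<in> fst G. degree G v \<ge> c1} < c2)
     \<longleftrightarrow> (\<exists>n::nat. n > 0 \<and>
            fam_le \<H> {complete n, complete_bip n n, copies n (complete_bip 1 n)})"
proof
  assume "\<exists>c1 c2 :: nat. \<forall>G. wf_graph G \<and> H_free \<H> G \<longrightarrow> card {v \<in> fst G. degree G v \<ge> c1} < c2"
  then obtain c1 c2 :: nat where c: "\<And>G. wf_graph G \<Longrightarrow> H_free \<H> G \<Longrightarrow> card {v \<in> fst G. degree G v \<ge> c1} < c2"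
    by blast
  show "\<exists>n::nat. n > 0 \<and> fam_le \<H> {complete n, complete_bip n n, copies n (complete_bip 1 n)}"
  proof (rule ccontr)
    assume neg: "\<not> ?thesis"
    define N where "N = c1 + c2 + 1"
    have "N > 0" unfolding N_def by simp
    have cN: "c1 \<le> N - 1" "c1 \<le> N" "c2 < N" unfolding N_def by simp_all
    have "\<not> fam_le \<H> {complete N, complete_bip N N, copies N (complete_bip 1 N)}"
      using neg \<open>N > 0\<close> by blast
    then obtain H2 where H2: "H2 \<in> {complete N, complete_bip N N, copies N (complete_bip 1 N)}"
      "\<forall>H1\<in>\<H>. \<not> induced_sub H1 H2"
      unfolding fam_le_def by blast
    have fr: "H_free \<H> H2" unfolding H_free_def using H2(2) by blast
    have "H2 = complete N \<or> H2 = complete_bip N N \<or> H2 = copies N (complete_bip 1 N)" using H2(1) by blast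
    then show False
    proof (elim disjE)
      assume h: "H2 = complete N"
      have "card {v \<in> fst H2. degree H2 v \<ge> c1} < c2" using c[OF _ fr] h wf_complete by simp
      moreover have "{v \<in> fst H2. degree H2 v \<ge> N - 1} \<subseteq> {v \<in> fst H2. degree H2 v \<ge> c1}"
        using cN by auto
      moreover have "finite (fst H2)" unfolding h complete_def by simp
      ultimately have "card {v \<in> fst H2. degree H2 v \<ge> N - 1} < c2"
        by (rule card_lt_mono2)
      moreover have "N \<le> card {v \<in> fst H2. degree H2 v \<ge> N - 1}" using count_complete[of N] h by simp
      ultimately show False using cN by linarith
    next
      assume h: "H2 = complete_bip N N"
      have "card {v \<in> fst H2. degree H2 v \<ge> c1} < c2" using c[OF _ fr] h wf_complete_bip by simp
      moreover have "{v \<in> fst H2. degree H2 v \<ge> N} \<subseteq> {v \<in> fst H2. degree H2 v \<ge> c1}"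
        using cN by auto
      moreover have "finite (fst H2)" unfolding h complete_bip_def by simp
      ultimately have "card {v \<in> fst H2. degree H2 v \<ge> N} < c2"
        by (rule card_lt_mono2)
      moreover have "N \<le> card {v \<in> fst H2. degree H2 v \<ge> N}" using count_bip[of N] h by simp
      ultimately show False using cN by linarith
    next
      assume h: "H2 = copies N (complete_bip 1 N)"
      have wf: "wf_graph H2" unfolding h by (rule wf_copies[OF wf_complete_bip])
      have "card {v \<in> fst H2. degree H2 v \<ge> c1} < c2" using c[OF wf fr] .
      moreover have "{v \<in> fst H2. degree H2 v \<ge> N} \<subseteq> {v \<in> fst H2. degree H2 v \<ge> c1}"
        using cN by auto
      moreover have "finite (fst H2)" using wf unfolding wf_graph_def by simp
      ultimately have "card {v \<in> fst H2. degree H2 v \<ge> N} < c2"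
        by (rule card_lt_mono2)
      moreover have "N \<le> card {v \<in> fst H2. degree H2 v \<ge> N}" using count_copies[of N] h by simp
      ultimately show False using cN by linarith
    qed
  qed
next
  assume "\<exists>n::nat. n > 0 \<and> fam_le \<H> {complete n, complete_bip n n, copies n (complete_bip 1 n)}"
  then obtain n :: nat where n: "n > 0" "fam_le \<H> {complete n, complete_bip n n, copies n (complete_bip 1 n)}"
    by blast
  obtain H1 where H1: "H1 \<in> \<H>" "induced_sub H1 (complete n)" using n(2) unfolding fam_le_def by blast
  obtain H2 where H2: "H2 \<in> \<H>" "induced_sub H2 (complete_bip n n)" using n(2) unfolding fam_le_def by blast
  obtain H3 where H3: "H3 \<in> \<H>" "induced_sub H3 (copies n (complete_bip 1 n))" using n(2) unfolding fam_le_def by blast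
  obtain r :: nat where r: "r \<ge> 1" and rr: "\<And>(V::nat set) (E::nat set set). finite V \<Longrightarrow> card V \<ge> r \<Longrightarrow>
      (\<exists>R \<subseteq> V. card R = n \<and> clique R E \<or> card R = n \<and> indep R E)"
    using ramsey2[of n n] by blast
  show "\<exists>c1 c2 :: nat. \<forall>G. wf_graph G \<and> H_free \<H> G \<longrightarrow> card {v \<in> fst G. degree G v \<ge> c1} < c2"
  proof (intro exI allI impI)
    fix G assume G: "wf_graph G \<and> H_free \<H> G"
    have wf: "wf_graph G" using G by blast
    have nK: "\<not> induced_sub (complete n) G"
    proof
      assume "induced_sub (complete n) G"
      then have "induced_sub H1 G" by (rule induced_trans[OF H1(2)])
      then show False using G H1(1) unfolding H_free_def by blast
    qed
    have nB: "\<not> induced_sub (complete_bip n n) G"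
    proof
      assume "induced_sub (complete_bip n n) G"
      then have "induced_sub H2 G" by (rule induced_trans[OF H2(2)])
      then show False using G H2(1) unfolding H_free_def by blast
    qed
    have nS: "\<not> induced_sub (copies n (complete_bip 1 n)) G"
    proof
      assume "induced_sub (copies n (complete_bip 1 n)) G"
      then have "induced_sub H3 G" by (rule induced_trans[OF H3(2)])
      then show False using G H3(1) unfolding H_free_def by blast
    qed
    have finV: "finite (fst G)" using wf unfolding wf_graph_def by blast
    have cr: "core (fst G) (snd G) n r"
    proof
      show "finite (fst G)" by (rule finV)
      show "\<forall>e\<in>snd G. card e = 2 \<and> e \<subseteq> fst G" using wf unfolding wf_graph_def by blast
      show "1 \<le> r" by (rule r)
      show "\<forall>X\<subseteq>fst G. r \<le> card X \<longrightarrow> (\<exists>Y\<subseteq>X. card Y = n \<and> indep Y (snd G))"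
      proof (intro allI impI)
        fix X assume X: "X \<subseteq> fst G" "r \<le> card X"
        have "finite X" using X(1) finV finite_subset by blast
        then obtain R where R: "R \<subseteq> X" "card R = n \<and> clique R (snd G) \<or> card R = n \<and> indep R (snd G)"
          using rr[OF _ X(2)] by blast
        have "\<not> (card R = n \<and> clique R (snd G))"
        proof
          assume "card R = n \<and> clique R (snd G)"
          then have "induced_sub (complete n) G" using embed_complete[OF wf, of R n] R(1) X(1) by blast
          then show False using nK by blast
        qed
        then show "\<exists>Y\<subseteq>X. card Y = n \<and> indep Y (snd G)" using R by blast
      qed
      show "\<not>(\<exists>A B. A \<subseteq> fst G \<and> B \<subseteq> fst G \<and> card A = n \<and> card B = n \<and> indep A (snd G) \<and> indep B (snd G) \<and>
                (\<forall>a\<in>A. \<forall>b\<in>B. {a,b} \<in> snd G))"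
      proof
        assume "\<exists>A B. A \<subseteq> fst G \<and> B \<subseteq> fst G \<and> card A = n \<and> card B = n \<and> indep A (snd G) \<and> indep B (snd G) \<and>
                (\<forall>a\<in>A. \<forall>b\<in>B. {a,b} \<in> snd G)"
        then obtain A B where "A \<subseteq> fst G" "B \<subseteq> fst G" "card A = n" "card B = n" "indep A (snd G)" "indep B (snd G)"
                "\<forall>a\<in>A. \<forall>b\<in>B. {a,b} \<in> snd G" by blast
        then have "induced_sub (complete_bip n n) G" by (rule embed_bip[OF wf])
        then show False using nB by blast
      qed
      show "\<not>(\<exists>\<phi>. isf n (snd G) (fst G) n \<phi>)"
      proof
        assume "\<exists>\<phi>. isf n (snd G) (fst G) n \<phi>"
        then obtain \<phi> where "isf n (snd G) (fst G) n \<phi>" by blast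
        then have "induced_sub (copies n (complete_bip 1 n)) G" by (rule embed_copies)
        then show False using nS by blast
      qed
    qed
    have "card {v \<in> fst G. bq r n n \<le> card (core.Nb (fst G) (snd G) v)} < bmu r n n"
      by (rule core.core_bound[OF cr])
    moreover have "core.Nb (fst G) (snd G) v = {u \<in> fst G. {v,u} \<in> snd G}" for v
      by (rule core.Nb_def[OF cr])
    ultimately show "card {v \<in> fst G. degree G v \<ge> bq r n n} < bmu r n n"
      unfolding degree_def by simp
  qed
qed


end
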